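(* Let $n\ge1$, $d\ge0$, and let $\mathrm{Sym}_n\subset\mathbb R^{n\times n}$ be the space of symmetric matrices. Consider undirected multigraphs with a directed output pair $H=(V,E,(a,b))$, taken up to isomorphism, with $|V|\le\min\{n,2+2d\}$, $|E|\le d$, and no isolated node in $V\setminus\{a,b\}$. For each such $H$, let $P_H:\mathrm{Sym}_n\to\mathbb R^{n\times n}$ be $P_{H'}$ restricted to $\mathrm{Sym}_n$, where $H'$ is any directed multigraph obtained by orienting each edge of $H$ (this does not depend on the orientation). Then these $P_H$ form a basis of the space of $S_n$-equivariant polynomial maps $\mathrm{Sym}_n\to\mathbb R^{n\times n}$ of degree at most $d$.
   Context: For a directed multigraph with output pair $H'=(V,E,(a,b))$ ($V=[m]$, $E$ a multiset of ordered pairs in $V\times V$ allowing loops and parallel edges, $a,b\in V$ not necessarily distinct and not in $E$), $P_{H'}(X)_{i_a,i_b}=\sum_{j\in[n]^m,\ j_a=i_a,\ j_b=i_b}\prod_{(r,s)\in E}X_{j_r,j_s}$ (with multiplicity; empty product $=1$), with all off-diagonal entries $0$ when $a=b$. An undirected multigraph with directed output pair has $E$ a multiset of unordered pairs $\{r,s\}$ (loops and parallel edges allowed) and an ordered red pair $(a,b)$; isomorphism is a node bijection preserving edge multisets and the ordered red pair. A node is isolated if no edge of $E$ is incident to it. $S_n$ acts on matrices by $(g\cdot X)_{ij}=X_{g^{-1}(i),g^{-1}(j)}$ (preserving $\mathrm{Sym}_n$); $P$ is equivariant if $P(g\cdot X)=g\cdot P(X)$ for all $g\in S_n$. *)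

theory Defs
  imports Complex_Main "HOL-Library.Multiset" "HOL-Library.Uprod" "HOL-Library.FuncSet"
    "HOL-Combinatorics.Permutations"
begin

text \<open>Matrices are functions nat => nat => real; an n x n matrix uses indices below n
  and is zero outside. Sym_n is the set of such symmetric matrices.\<close>

definition sym_mats :: "nat \<Rightarrow> (nat \<Rightarrow> nat \<Rightarrow> real) set" where
  "sym_mats n = {X. (\<forall>i j. X i j = X j i) \<and> (\<forall>i j. n \<le> i \<or> n \<le> j \<longrightarrow> X i j = 0)}"

definition perm_act :: "(nat \<Rightarrow> nat) \<Rightarrow> (nat \<Rightarrow> nat \<Rightarrow> real) \<Rightarrow> nat \<Rightarrow> nat \<Rightarrow> real" where
  "perm_act g X i j = X (inv g i) (inv g j)"

definition equivariant ::
  "nat \<Rightarrow> ((nat \<Rightarrow> nat \<Rightarrow> real) \<Rightarrow> nat \<Rightarrow> nat \<Rightarrow> real) \<Rightarrow> bool" where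
  "equivariant n P \<longleftrightarrow> (\<forall>g X i j. g permutes {0..<n} \<longrightarrow> X \<in> sym_mats n \<longrightarrow> i < n \<longrightarrow> j < n \<longrightarrow>
      P (perm_act g X) i j = perm_act g (P X) i j)"

definition poly_fun_deg :: "nat \<Rightarrow> nat \<Rightarrow> ((nat \<Rightarrow> nat \<Rightarrow> real) \<Rightarrow> real) \<Rightarrow> bool" where
  "poly_fun_deg n d f \<longleftrightarrow> (\<exists>(M :: (nat \<times> nat \<Rightarrow> nat) set) (c :: (nat \<times> nat \<Rightarrow> nat) \<Rightarrow> real).
      finite M \<and>
      (\<forall>\<alpha>\<in>M. (\<forall>p. \<alpha> p \<noteq> 0 \<longrightarrow> p \<in> {0..<n} \<times> {0..<n}) \<and>
               (\<Sum>p\<in>{0..<n} \<times> {0..<n}. \<alpha> p) \<le> d) \<and>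
      (\<forall>X\<in>sym_mats n. f X = (\<Sum>\<alpha>\<in>M. c \<alpha> * (\<Prod>p\<in>{0..<n} \<times> {0..<n}. X (fst p) (snd p) ^ \<alpha> p))))"

definition equiv_poly_map ::
  "nat \<Rightarrow> nat \<Rightarrow> ((nat \<Rightarrow> nat \<Rightarrow> real) \<Rightarrow> nat \<Rightarrow> nat \<Rightarrow> real) \<Rightarrow> bool" where
  "equiv_poly_map n d P \<longleftrightarrow> (\<forall>i<n. \<forall>j<n. poly_fun_deg n d (\<lambda>X. P X i j)) \<and> equivariant n P"

text \<open>Directed multigraph with output pair: nodes [m] = {0..<m}, edges a multiset of
  ordered pairs, output pair (a,b).\<close>
definition P_dir :: "nat \<Rightarrow> nat \<Rightarrow> (nat \<times> nat) multiset \<Rightarrow> nat \<Rightarrow> nat \<Rightarrow>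
    (nat \<Rightarrow> nat \<Rightarrow> real) \<Rightarrow> nat \<Rightarrow> nat \<Rightarrow> real" where
  "P_dir n m D a b X ia ib =
     (if a = b \<and> ia \<noteq> ib then 0 else
       (\<Sum>j\<in>{j \<in> Pi\<^sub>E {0..<m} (\<lambda>_. {0..<n}). j a = ia \<and> j b = ib}.
          prod_mset (image_mset (\<lambda>(r, s). X (j r) (j s)) D)))"

datatype ugraph = UG (nverts: nat) (uedges: "nat uprod multiset") (outa: nat) (outb: nat)

definition wf_ugraph :: "ugraph \<Rightarrow> bool" where
  "wf_ugraph H \<longleftrightarrow> (\<forall>e\<in>#uedges H. set_uprod e \<subseteq> {0..<nverts H})
      \<and> outa H < nverts H \<and> outb H < nverts H"

definition ugraph_iso :: "ugraph \<Rightarrow> ugraph \<Rightarrow> bool" where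
  "ugraph_iso H1 H2 \<longleftrightarrow> nverts H1 = nverts H2 \<and>
     (\<exists>\<sigma>. bij_betw \<sigma> {0..<nverts H1} {0..<nverts H2} \<and>
          image_mset (map_uprod \<sigma>) (uedges H1) = uedges H2 \<and>
          \<sigma> (outa H1) = outa H2 \<and> \<sigma> (outb H1) = outb H2)"

definition admissible :: "nat \<Rightarrow> nat \<Rightarrow> ugraph \<Rightarrow> bool" where
  "admissible n d H \<longleftrightarrow> wf_ugraph H \<and> nverts H \<le> min n (2 + 2 * d) \<and> size (uedges H) \<le> d \<and>
     (\<forall>v<nverts H. v \<noteq> outa H \<and> v \<noteq> outb H \<longrightarrow> (\<exists>e\<in>#uedges H. v \<in> set_uprod e))"

text \<open>An orientation of the edges (a fixed choice; the paper notes P_H does not depend on it).\<close>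
definition orient :: "nat uprod multiset \<Rightarrow> (nat \<times> nat) multiset" where
  "orient E = (SOME D. image_mset (\<lambda>(r, s). Upair r s) D = E)"

definition P_graph :: "nat \<Rightarrow> ugraph \<Rightarrow> (nat \<Rightarrow> nat \<Rightarrow> real) \<Rightarrow> nat \<Rightarrow> nat \<Rightarrow> real" where
  "P_graph n H = P_dir n (nverts H) (orient (uedges H)) (outa H) (outb H)"

text \<open>A family (F h)_{h in R} of maps is a basis of the space S of maps Sym_n -> R^{n x n},
  where maps are identified when they agree on Sym_n (entries i,j < n).\<close>
definition is_basis_of ::
  "nat \<Rightarrow> (((nat \<Rightarrow> nat \<Rightarrow> real) \<Rightarrow> nat \<Rightarrow> nat \<Rightarrow> real) \<Rightarrow> bool) \<Rightarrow> 'i set \<Rightarrow>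
   ('i \<Rightarrow> (nat \<Rightarrow> nat \<Rightarrow> real) \<Rightarrow> nat \<Rightarrow> nat \<Rightarrow> real) \<Rightarrow> bool" where
  "is_basis_of n S R F \<longleftrightarrow> finite R \<and> (\<forall>h\<in>R. S (F h)) \<and>
     (\<forall>c :: 'i \<Rightarrow> real. (\<forall>X\<in>sym_mats n. \<forall>i<n. \<forall>j<n. (\<Sum>h\<in>R. c h * F h X i j) = 0)
          \<longrightarrow> (\<forall>h\<in>R. c h = 0)) \<and>
     (\<forall>P. S P \<longrightarrow> (\<exists>c :: 'i \<Rightarrow> real. \<forall>X\<in>sym_mats n. \<forall>i<n. \<forall>j<n. P X i j = (\<Sum>h\<in>R. c h * F h X i j)))"

end

theory Submission
  imports Defs "HOL-Computational_Algebra.Polynomial"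
begin

definition symm :: "(nat \<Rightarrow> nat \<Rightarrow> real) \<Rightarrow> bool" where
  "symm X \<longleftrightarrow> (\<forall>i j. X i j = X j i)"

definition uval :: "(nat \<Rightarrow> nat \<Rightarrow> real) \<Rightarrow> nat uprod \<Rightarrow> real" where
  "uval X e = X (Min (set_uprod e)) (Max (set_uprod e))"

definition mmon :: "nat uprod multiset \<Rightarrow> (nat \<Rightarrow> nat \<Rightarrow> real) \<Rightarrow> real" where
  "mmon \<mu> X = prod_mset (image_mset (uval X) \<mu>)"

definition UU :: "nat \<Rightarrow> nat uprod set" where
  "UU n = {e. set_uprod e \<subseteq> {0..<n}}"

definition Mon :: "nat \<Rightarrow> nat \<Rightarrow> nat uprod multiset set" where
  "Mon n d = {\<mu>. set_mset \<mu> \<subseteq> UU n \<and> size \<mu> \<le> d}"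

definition Fk :: "nat \<Rightarrow> nat \<Rightarrow> (nat uprod multiset \<Rightarrow> nat \<Rightarrow> nat \<Rightarrow> real) \<Rightarrow>
    (nat \<Rightarrow> nat \<Rightarrow> real) \<Rightarrow> nat \<Rightarrow> nat \<Rightarrow> real" where
  "Fk n d \<kappa> X i j = (\<Sum>\<mu>\<in>Mon n d. \<kappa> \<mu> i j * mmon \<mu> X)"

lemma uval_Upair: "symm X \<Longrightarrow> uval X (Upair i j) = X i j"
  unfolding uval_def symm_def
  by (cases "i \<le> j") (auto simp: min_def max_def)

lemma Upair_comm: "Upair i j = Upair j i"
  by auto

lemma sym_mats_symm: "X \<in> sym_mats n \<Longrightarrow> symm X"
  by (simp add: sym_mats_def symm_def)

lemma UU_eq: "UU n = (\<lambda>p. Upair (fst p) (snd p)) ` ({0..<n} \<times> {0..<n})"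
proof
  show "UU n \<subseteq> (\<lambda>p. Upair (fst p) (snd p)) ` ({0..<n} \<times> {0..<n})"
  proof
    fix e assume "e \<in> UU n"
    obtain i j where e: "e = Upair i j" by (cases e)
    then have "i < n" "j < n" using \<open>e \<in> UU n\<close> by (auto simp: UU_def)
    then show "e \<in> (\<lambda>p. Upair (fst p) (snd p)) ` ({0..<n} \<times> {0..<n})"
      using e by (intro image_eqI[of _ _ "(i,j)"]) auto
  qed
qed (auto simp: UU_def)

lemma finite_UU: "finite (UU n)"
  by (simp add: UU_eq)

lemma Mon_eq: "Mon n d = (\<Union>s\<in>{0..d}. multisets_of_size (UU n) s)"
  by (auto simp: Mon_def multisets_of_size_def)

lemma finite_Mon: "finite (Mon n d)"
  by (simp add: Mon_eq finite_UU finite_multisets_of_size)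

lemma mmon_add: "mmon (add_mset e \<mu>) X = uval X e * mmon \<mu> X"
  by (simp add: mmon_def)

lemma mmon_empty[simp]: "mmon {#} X = 1"
  by (simp add: mmon_def)

lemma mmon_union: "mmon (\<mu> + \<nu>) X = mmon \<mu> X * mmon \<nu> X"
  by (simp add: mmon_def)

lemma prod_mset_pow: "prod_mset (image_mset (\<lambda>e. (x::real) ^ f e) M) = x ^ sum_mset (image_mset f M)"
  by (induction M) (auto simp: power_add)

lemma sum_mset_count:
  assumes "finite A" "set_mset M \<subseteq> A"
  shows "sum_mset (image_mset (f :: 'a \<Rightarrow> nat) M) = (\<Sum>e\<in>A. count M e * f e)"
  using assms(2)
proof (induction M)
  case empty then show ?case by simp
next
  case (add x M)
  have "(\<Sum>e\<in>A. count (add_mset x M) e * f e) = (\<Sum>e\<in>A. count M e * f e + (if e = x then f e else 0))"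
    by (intro sum.cong) auto
  also have "\<dots> = (\<Sum>e\<in>A. count M e * f e) + f x"
    using add.prems assms(1) by (simp add: sum.distrib)
  finally show ?case using add by simp
qed

lemma digits_unique:
  fixes f g :: "nat \<Rightarrow> nat"
  assumes "\<forall>k<K. f k < B" "\<forall>k<K. g k < B" "(\<Sum>k<K. f k * B^k) = (\<Sum>k<K. g k * B^k)" "k < K"
  shows "f k = g k"
  using assms
proof (induction K arbitrary: f g k)
  case 0 then show ?case by simp
next
  case (Suc K)
  note IH = Suc.IH
  have pf: "\<forall>k<Suc K. f k < B" and pg: "\<forall>k<Suc K. g k < B" and ps: "(\<Sum>k<Suc K. f k * B^k) = (\<Sum>k<Suc K. g k * B^k)"
    and kk: "k < Suc K" using Suc.prems by blast+
  have f0: "f 0 < B" "g 0 < B" using pf pg by blast+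
  then have B: "B > 0" by simp
  have ef: "(\<Sum>k<Suc K. f k * B^k) = f 0 + B * (\<Sum>k<K. f (Suc k) * B^k)"
  proof -
    have "(\<Sum>k<Suc K. f k * B^k) = f 0 * B^0 + (\<Sum>k<K. f (Suc k) * B^(Suc k))"
      by (rule sum.lessThan_Suc_shift)
    also have "(\<Sum>k<K. f (Suc k) * B^(Suc k)) = B * (\<Sum>k<K. f (Suc k) * B^k)"
      unfolding sum_distrib_left by (intro sum.cong) auto
    finally show ?thesis by simp
  qed
  have eg: "(\<Sum>k<Suc K. g k * B^k) = g 0 + B * (\<Sum>k<K. g (Suc k) * B^k)"
  proof -
    have "(\<Sum>k<Suc K. g k * B^k) = g 0 * B^0 + (\<Sum>k<K. g (Suc k) * B^(Suc k))"
      by (rule sum.lessThan_Suc_shift)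
    also have "(\<Sum>k<K. g (Suc k) * B^(Suc k)) = B * (\<Sum>k<K. g (Suc k) * B^k)"
      unfolding sum_distrib_left by (intro sum.cong) auto
    finally show ?thesis by simp
  qed
  define SF where "SF = (\<Sum>k<K. f (Suc k) * B^k)"
  define SG where "SG = (\<Sum>k<K. g (Suc k) * B^k)"
  have eq: "f 0 + B * SF = g 0 + B * SG"
    using ps ef eg unfolding SF_def SG_def by simp
  have "(f 0 + B * SF) mod B = f 0" using f0 by simp
  moreover have "(g 0 + B * SG) mod B = g 0" using f0 by simp
  ultimately have h0: "f 0 = g 0" using eq by metis
  have hr: "SF = SG"
    using eq h0 B by simp
  show ?case
  proof (cases k)
    case 0 then show ?thesis using h0 by simp
  next
    case (Suc k')
    have "\<forall>k<K. f (Suc k) < B" "\<forall>k<K. g (Suc k) < B" using pf pg by auto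
    moreover have "k' < K" using kk Suc by simp
    ultimately have "f (Suc k') = g (Suc k')"
      using IH[of "\<lambda>k. f (Suc k)" "\<lambda>k. g (Suc k)" k'] hr unfolding SF_def SG_def by blast
    then show ?thesis using Suc by simp
  qed
qed


lemma mon_indep:
  assumes Z: "\<forall>X\<in>sym_mats n. (\<Sum>\<mu>\<in>Mon n d. c \<mu> * mmon \<mu> X) = 0" and m0: "\<mu>0 \<in> Mon n d"
  shows "c \<mu>0 = 0"
proof -
  define K where "K = card (UU n)"
  obtain h where h: "bij_betw h {0..<K} (UU n)"
    using ex_bij_betw_nat_finite[OF finite_UU] unfolding K_def by blast
  define idx where "idx = inv_into {0..<K} h"
  have hinj: "inj_on h {0..<K}" using h by (simp add: bij_betw_def)
  define B where "B = Suc d"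
  define w where "w e = B ^ idx e" for e
  define W where "W \<mu> = sum_mset (image_mset w \<mu>)" for \<mu>
  define Xx where "Xx x i j = (if i < n \<and> j < n then (x::real) ^ w (Upair i j) else 0)" for x i j
  have Xs: "Xx x \<in> sym_mats n" for x
    unfolding sym_mats_def Xx_def by (auto simp: Upair_comm[of _ i for i])
  have uv: "uval (Xx x) e = x ^ w e" if "e \<in> UU n" for x e
  proof -
    obtain i j where e: "e = Upair i j" by (cases e)
    have "i < n" "j < n" using that e by (auto simp: UU_def)
    then show ?thesis using e uval_Upair[OF sym_mats_symm[OF Xs]] by (simp add: Xx_def)
  qed
  have mm: "mmon \<mu> (Xx x) = x ^ W \<mu>" if "\<mu> \<in> Mon n d" for \<mu> x
  proof -
    have "image_mset (uval (Xx x)) \<mu> = image_mset (\<lambda>e. x ^ w e) \<mu>"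
      using that uv by (intro image_mset_cong) (auto simp: Mon_def)
    then show ?thesis unfolding mmon_def W_def by (simp add: prod_mset_pow)
  qed
  have Wdig: "W \<mu> = (\<Sum>k<K. count \<mu> (h k) * B^k)" if "\<mu> \<in> Mon n d" for \<mu>
  proof -
    have "W \<mu> = (\<Sum>e\<in>UU n. count \<mu> e * w e)"
      unfolding W_def using that by (intro sum_mset_count finite_UU) (auto simp: Mon_def)
    also have "\<dots> = (\<Sum>k\<in>{0..<K}. count \<mu> (h k) * w (h k))"
      using sum.reindex_bij_betw[OF h, of "\<lambda>e. count \<mu> e * w e"] by simp
    also have "\<dots> = (\<Sum>k<K. count \<mu> (h k) * B^k)"
      unfolding lessThan_atLeast0 using hinj
      by (intro sum.cong) (auto simp: w_def idx_def inv_into_f_f)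
    finally show ?thesis .
  qed
  have Winj: "\<mu> = \<nu>" if "\<mu> \<in> Mon n d" "\<nu> \<in> Mon n d" "W \<mu> = W \<nu>" for \<mu> \<nu>
  proof (rule multiset_eqI)
    fix e
    show "count \<mu> e = count \<nu> e"
    proof (cases "e \<in> UU n")
      case True
      then have "e \<in> h ` {0..<K}" using h by (simp add: bij_betw_def)
      then obtain k where k: "k < K" "e = h k" by auto
      have "\<forall>k<K. count \<mu> (h k) < B" "\<forall>k<K. count \<nu> (h k) < B"
        using that(1,2) count_le_size[of \<mu>] count_le_size[of \<nu>]
        by (auto simp: Mon_def B_def less_Suc_eq_le intro: order_trans[OF count_le_size])
      then show ?thesis using digits_unique[of K "\<lambda>k. count \<mu> (h k)" B "\<lambda>k. count \<nu> (h k)" k]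
          Wdig[OF that(1)] Wdig[OF that(2)] that(3) k by simp
    next
      case False
      then have "e \<notin># \<mu>" "e \<notin># \<nu>" using that by (auto simp: Mon_def)
      then show ?thesis by (simp add: not_in_iff)
    qed
  qed
  define p where "p = (\<Sum>\<mu>\<in>Mon n d. monom (c \<mu>) (W \<mu>))"
  have "poly p x = 0" for x
  proof -
    have "poly p x = (\<Sum>\<mu>\<in>Mon n d. c \<mu> * x ^ W \<mu>)"
      unfolding p_def by (simp add: poly_sum poly_monom)
    also have "\<dots> = (\<Sum>\<mu>\<in>Mon n d. c \<mu> * mmon \<mu> (Xx x))"
      by (intro sum.cong) (auto simp: mm)
    also have "\<dots> = 0" using Z Xs by blast
    finally show ?thesis .
  qed
  then have p0: "p = 0" using poly_all_0_iff_0 by blast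
  have "coeff p (W \<mu>0) = (\<Sum>\<mu>\<in>Mon n d. if W \<mu> = W \<mu>0 then c \<mu> else 0)"
    unfolding p_def coeff_sum by (intro sum.cong) auto
  also have "\<dots> = (\<Sum>\<mu>\<in>Mon n d. if \<mu> = \<mu>0 then c \<mu> else 0)"
    using Winj m0 by (intro sum.cong) auto
  also have "\<dots> = c \<mu>0" using m0 finite_Mon by simp
  finally show ?thesis using p0 by simp
qed


definition am :: "nat \<Rightarrow> (nat \<times> nat \<Rightarrow> nat) \<Rightarrow> nat uprod multiset" where
  "am n \<alpha> = (\<Sum>p\<in>{0..<n}\<times>{0..<n}. replicate_mset (\<alpha> p) (Upair (fst p) (snd p)))"

lemma mmon_sum: "finite A \<Longrightarrow> mmon (\<Sum>a\<in>A. f a) X = (\<Prod>a\<in>A. mmon (f a) X)"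
  by (induction A rule: finite_induct) (auto simp: mmon_union)

lemma mmon_replicate: "mmon (replicate_mset k e) X = uval X e ^ k"
  by (induction k) (auto simp: mmon_add)

lemma size_sum_mset_fin: "finite A \<Longrightarrow> size (\<Sum>a\<in>A. f a :: 'b multiset) = (\<Sum>a\<in>A. size (f a))"
  by (induction A rule: finite_induct) auto

lemma mmon_am:
  assumes "symm X"
  shows "mmon (am n \<alpha>) X = (\<Prod>p\<in>{0..<n}\<times>{0..<n}. X (fst p) (snd p) ^ \<alpha> p)"
  unfolding am_def by (simp add: mmon_sum mmon_replicate uval_Upair[OF assms])

lemma size_am: "size (am n \<alpha>) = (\<Sum>p\<in>{0..<n}\<times>{0..<n}. \<alpha> p)"
  unfolding am_def by (simp add: size_sum_mset_fin)

lemma set_am: "set_mset (am n \<alpha>) \<subseteq> UU n"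
  unfolding am_def by (auto simp: set_mset_sum UU_def)

lemma am_Mon: "(\<Sum>p\<in>{0..<n}\<times>{0..<n}. \<alpha> p) \<le> d \<Longrightarrow> am n \<alpha> \<in> Mon n d"
  using set_am size_am by (auto simp: Mon_def)

lemma am_exists:
  "set_mset \<mu> \<subseteq> UU n \<Longrightarrow> \<exists>\<alpha>. (\<forall>p. \<alpha> p \<noteq> 0 \<longrightarrow> p \<in> {0..<n}\<times>{0..<n}) \<and>
      (\<Sum>p\<in>{0..<n}\<times>{0..<n}. \<alpha> p) = size \<mu> \<and> am n \<alpha> = \<mu>"
proof (induction \<mu>)
  case empty
  show ?case by (rule exI[of _ "\<lambda>_. 0"]) (simp add: am_def)
next
  case (add e \<mu>)
  then obtain \<alpha> where a: "\<forall>p. \<alpha> p \<noteq> 0 \<longrightarrow> p \<in> {0..<n}\<times>{0..<n}"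
      "(\<Sum>p\<in>{0..<n}\<times>{0..<n}. \<alpha> p) = size \<mu>" "am n \<alpha> = \<mu>" by auto
  obtain i j where e: "e = Upair i j" by (cases e)
  have ij: "i < n" "j < n" using add.prems e by (auto simp: UU_def)
  define \<beta> where "\<beta> p = \<alpha> p + (if p = (i, j) then 1 else 0)" for p
  have "(\<Sum>p\<in>{0..<n}\<times>{0..<n}. \<beta> p) = (\<Sum>p\<in>{0..<n}\<times>{0..<n}. \<alpha> p) + 1"
    unfolding \<beta>_def using ij by (simp add: sum.distrib)
  moreover have "am n \<beta> = am n \<alpha> + (\<Sum>p\<in>{0..<n}\<times>{0..<n}. if p = (i, j) then {#Upair i j#} else {#})"
    unfolding am_def \<beta>_def sum.distrib[symmetric]
    by (intro sum.cong) auto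
  moreover have "(\<Sum>p\<in>{0..<n}\<times>{0..<n}. if p = (i, j) then {#Upair i j#} else {#}) = {#Upair i j#}"
    using ij by simp
  ultimately have s12: "(\<Sum>p\<in>{0..<n}\<times>{0..<n}. \<beta> p) = size (add_mset e \<mu>)"
      "am n \<beta> = add_mset e \<mu>" using a e by auto
  have "\<forall>p. \<beta> p \<noteq> 0 \<longrightarrow> p \<in> {0..<n}\<times>{0..<n}" using a(1) ij by (auto simp: \<beta>_def)
  then show ?case using s12 by blast
qed

lemma poly_to_mon:
  assumes "poly_fun_deg n d f"
  shows "\<exists>c. \<forall>X\<in>sym_mats n. f X = (\<Sum>\<mu>\<in>Mon n d. c \<mu> * mmon \<mu> X)"
proof -
  obtain M cc where M: "finite M"
    "\<forall>\<alpha>\<in>M. (\<forall>p. \<alpha> p \<noteq> 0 \<longrightarrow> p \<in> {0..<n} \<times> {0..<n}) \<and> (\<Sum>p\<in>{0..<n} \<times> {0..<n}. \<alpha> p) \<le> d"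
    "\<forall>X\<in>sym_mats n. f X = (\<Sum>\<alpha>\<in>M. cc \<alpha> * (\<Prod>p\<in>{0..<n} \<times> {0..<n}. X (fst p) (snd p) ^ \<alpha> p))"
    using assms unfolding poly_fun_deg_def by blast
  define c where "c \<mu> = (\<Sum>\<alpha>\<in>{\<alpha>\<in>M. am n \<alpha> = \<mu>}. cc \<alpha>)" for \<mu>
  have sub: "am n ` M \<subseteq> Mon n d" using M(2) am_Mon by blast
  show ?thesis
  proof (intro exI[of _ c] ballI)
    fix X assume X: "X \<in> sym_mats n"
    have "(\<Sum>\<mu>\<in>Mon n d. c \<mu> * mmon \<mu> X) =
        (\<Sum>\<mu>\<in>Mon n d. \<Sum>\<alpha>\<in>{\<alpha>\<in>M. am n \<alpha> = \<mu>}. cc \<alpha> * mmon (am n \<alpha>) X)"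
      unfolding c_def sum_distrib_right by (intro sum.cong) auto
    also have "\<dots> = (\<Sum>\<alpha>\<in>M. cc \<alpha> * mmon (am n \<alpha>) X)"
      by (rule sum.group[OF M(1) finite_Mon sub])
    also have "\<dots> = f X"
      using M(3) X by (simp add: mmon_am[OF sym_mats_symm[OF X]])
    finally show "f X = (\<Sum>\<mu>\<in>Mon n d. c \<mu> * mmon \<mu> X)" by simp
  qed
qed

lemma mon_to_poly: "poly_fun_deg n d (\<lambda>X. \<Sum>\<mu>\<in>Mon n d. c \<mu> * mmon \<mu> X)"
proof -
  define amI where "amI \<mu> = (SOME \<alpha>. (\<forall>p. \<alpha> p \<noteq> 0 \<longrightarrow> p \<in> {0..<n}\<times>{0..<n}) \<and>
      (\<Sum>p\<in>{0..<n}\<times>{0..<n}. \<alpha> p) = size \<mu> \<and> am n \<alpha> = \<mu>)" for \<mu>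
  have amI: "(\<forall>p. amI \<mu> p \<noteq> 0 \<longrightarrow> p \<in> {0..<n}\<times>{0..<n}) \<and>
      (\<Sum>p\<in>{0..<n}\<times>{0..<n}. amI \<mu> p) = size \<mu> \<and> am n (amI \<mu>) = \<mu>" if "\<mu> \<in> Mon n d" for \<mu>
  proof -
    have "\<exists>\<alpha>. (\<forall>p. \<alpha> p \<noteq> 0 \<longrightarrow> p \<in> {0..<n}\<times>{0..<n}) \<and>
      (\<Sum>p\<in>{0..<n}\<times>{0..<n}. \<alpha> p) = size \<mu> \<and> am n \<alpha> = \<mu>"
      using that by (intro am_exists) (auto simp: Mon_def)
    then show ?thesis unfolding amI_def by (rule someI_ex)
  qed
  define cc where "cc \<alpha> = (\<Sum>\<mu>\<in>{\<mu>\<in>Mon n d. amI \<mu> = \<alpha>}. c \<mu>)" for \<alpha>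
  have f1: "finite (amI ` Mon n d)" by (simp add: finite_Mon)
  have f2: "\<forall>\<alpha>\<in>amI ` Mon n d. (\<forall>p. \<alpha> p \<noteq> 0 \<longrightarrow> p \<in> {0..<n} \<times> {0..<n}) \<and> (\<Sum>p\<in>{0..<n} \<times> {0..<n}. \<alpha> p) \<le> d"
  proof
    fix \<alpha> assume "\<alpha> \<in> amI ` Mon n d"
    then obtain \<mu> where "\<mu> \<in> Mon n d" "\<alpha> = amI \<mu>" by auto
    then show "(\<forall>p. \<alpha> p \<noteq> 0 \<longrightarrow> p \<in> {0..<n} \<times> {0..<n}) \<and> (\<Sum>p\<in>{0..<n} \<times> {0..<n}. \<alpha> p) \<le> d"
      using amI by (auto simp: Mon_def)
  qed
  have f3: "\<forall>X\<in>sym_mats n. (\<Sum>\<mu>\<in>Mon n d. c \<mu> * mmon \<mu> X) =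
        (\<Sum>\<alpha>\<in>amI ` Mon n d. cc \<alpha> * (\<Prod>p\<in>{0..<n} \<times> {0..<n}. X (fst p) (snd p) ^ \<alpha> p))"
  proof
    fix X assume X: "X \<in> sym_mats n"
    have "(\<Sum>\<alpha>\<in>amI ` Mon n d. cc \<alpha> * (\<Prod>p\<in>{0..<n} \<times> {0..<n}. X (fst p) (snd p) ^ \<alpha> p)) =
       (\<Sum>\<alpha>\<in>amI ` Mon n d. \<Sum>\<mu>\<in>{\<mu>\<in>Mon n d. amI \<mu> = \<alpha>}. c \<mu> * (\<Prod>p\<in>{0..<n} \<times> {0..<n}. X (fst p) (snd p) ^ amI \<mu> p))"
      unfolding cc_def sum_distrib_right by (intro sum.cong) auto
    also have "\<dots> = (\<Sum>\<mu>\<in>Mon n d. c \<mu> * (\<Prod>p\<in>{0..<n} \<times> {0..<n}. X (fst p) (snd p) ^ amI \<mu> p))"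
      by (rule sum.group) (auto simp: finite_Mon)
    also have "\<dots> = (\<Sum>\<mu>\<in>Mon n d. c \<mu> * mmon \<mu> X)"
    proof (intro sum.cong refl)
      fix \<mu> assume m: "\<mu> \<in> Mon n d"
      have "mmon \<mu> X = mmon (am n (amI \<mu>)) X" using amI[OF m] by simp
      then show "c \<mu> * (\<Prod>p\<in>{0..<n} \<times> {0..<n}. X (fst p) (snd p) ^ amI \<mu> p) = c \<mu> * mmon \<mu> X"
        by (simp add: mmon_am[OF sym_mats_symm[OF X]])
    qed
    finally show "(\<Sum>\<mu>\<in>Mon n d. c \<mu> * mmon \<mu> X) =
        (\<Sum>\<alpha>\<in>amI ` Mon n d. cc \<alpha> * (\<Prod>p\<in>{0..<n} \<times> {0..<n}. X (fst p) (snd p) ^ \<alpha> p))" by simp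
  qed
  show ?thesis unfolding poly_fun_deg_def
    by (rule exI[of _ "amI ` Mon n d"], rule exI[of _ cc]) (use f1 f2 f3 in simp)
qed


definition gm :: "(nat \<Rightarrow> nat) \<Rightarrow> nat uprod multiset \<Rightarrow> nat uprod multiset" where
  "gm g \<mu> = image_mset (map_uprod g) \<mu>"

definition invar :: "nat \<Rightarrow> nat \<Rightarrow> (nat uprod multiset \<Rightarrow> nat \<Rightarrow> nat \<Rightarrow> real) \<Rightarrow> bool" where
  "invar n d \<kappa> \<longleftrightarrow> (\<forall>g. g permutes {0..<n} \<longrightarrow>
      (\<forall>\<mu>\<in>Mon n d. \<forall>i<n. \<forall>j<n. \<kappa> (gm g \<mu>) (g i) (g j) = \<kappa> \<mu> i j))"

lemma gm_comp: "gm g (gm h \<mu>) = gm (g \<circ> h) \<mu>"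
  unfolding gm_def by (simp add: image_mset.compositionality o_def uprod.map_comp)

lemma gm_id: "gm id \<mu> = \<mu>"
  unfolding gm_def by (simp add: uprod.map_id0)

lemma gm_inv:
  assumes "g permutes S"
  shows "gm g (gm (inv g) \<mu>) = \<mu>" "gm (inv g) (gm g \<mu>) = \<mu>"
  by (simp_all add: gm_comp permutes_inv_o[OF assms] gm_id)

lemma perm_lt: assumes "g permutes {0..<(n::nat)}" "i < n" shows "g i < n"
proof -
  have "g i \<in> {0..<n}" using permutes_in_image[OF assms(1)] assms(2) by simp
  then show ?thesis by simp
qed

lemma gm_Mon:
  assumes "g permutes {0..<n}" "\<mu> \<in> Mon n d"
  shows "gm g \<mu> \<in> Mon n d"
proof -
  have "set_uprod (map_uprod g e) \<subseteq> {0..<n}" if "e \<in> UU n" for e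
    using that perm_lt[OF assms(1)] by (cases e) (auto simp: UU_def)
  then show ?thesis using assms(2) by (auto simp: Mon_def gm_def UU_def)
qed

lemma gm_bij:
  assumes "g permutes {0..<n}"
  shows "bij_betw (gm g) (Mon n d) (Mon n d)"
  by (rule bij_betw_byWitness[where f' = "gm (inv g)"])
     (auto simp: gm_inv[OF assms] gm_Mon[OF assms] gm_Mon[OF permutes_inv[OF assms]])

lemma perm_act_symm: "symm X \<Longrightarrow> symm (perm_act g X)"
  by (simp add: symm_def perm_act_def)

lemma perm_act_sym_mats:
  assumes "g permutes {0..<n}" "X \<in> sym_mats n"
  shows "perm_act g X \<in> sym_mats n"
proof -
  have ig: "inv g permutes {0..<n}" using permutes_inv[OF assms(1)] .
  have "inv g i = i" if "n \<le> i" for i using permutes_not_in[OF ig] that by simp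
  then show ?thesis using assms(2) unfolding sym_mats_def perm_act_def by auto
qed

lemma uval_perm: "symm X \<Longrightarrow> uval (perm_act g X) e = uval X (map_uprod (inv g) e)"
  by (cases e) (simp add: uval_Upair perm_act_symm perm_act_def)

lemma mmon_perm: assumes "symm X" shows "mmon \<mu> (perm_act g X) = mmon (gm (inv g) \<mu>) X"
proof -
  have "image_mset (uval (perm_act g X)) \<mu> = image_mset (\<lambda>e. uval X (map_uprod (inv g) e)) \<mu>"
    by (rule image_mset_cong) (rule uval_perm[OF assms])
  then show ?thesis unfolding mmon_def gm_def by (simp add: image_mset.compositionality o_def)
qed

lemma Fk_perm:
  assumes "g permutes {0..<n}" "symm X"
  shows "Fk n d \<kappa> (perm_act g X) i j = (\<Sum>\<nu>\<in>Mon n d. \<kappa> (gm g \<nu>) i j * mmon \<nu> X)"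
proof -
  have "Fk n d \<kappa> (perm_act g X) i j = (\<Sum>\<mu>\<in>Mon n d. \<kappa> \<mu> i j * mmon (gm (inv g) \<mu>) X)"
    unfolding Fk_def by (simp add: mmon_perm[OF assms(2)])
  also have "\<dots> = (\<Sum>\<mu>\<in>Mon n d. \<kappa> (gm g (gm (inv g) \<mu>)) i j * mmon (gm (inv g) \<mu>) X)"
    by (simp add: gm_inv[OF assms(1)])
  also have "\<dots> = (\<Sum>\<nu>\<in>Mon n d. \<kappa> (gm g \<nu>) i j * mmon \<nu> X)"
    using sum.reindex_bij_betw[OF gm_bij[OF permutes_inv[OF assms(1)]],
        of "\<lambda>\<nu>. \<kappa> (gm g \<nu>) i j * mmon \<nu> X" d] by simp
  finally show ?thesis .
qed

lemma invar_equiv: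
  assumes "invar n d \<kappa>"
  shows "equivariant n (Fk n d \<kappa>)"
  unfolding equivariant_def
proof (intro allI impI)
  fix g X i j assume g: "g permutes {0..<n}" and X: "X \<in> sym_mats n" and ij: "i < n" "j < n"
  have ig: "inv g i < n" "inv g j < n" using perm_lt[OF permutes_inv[OF g]] ij by auto
  have "Fk n d \<kappa> (perm_act g X) i j = (\<Sum>\<nu>\<in>Mon n d. \<kappa> (gm g \<nu>) i j * mmon \<nu> X)"
    by (rule Fk_perm[OF g sym_mats_symm[OF X]])
  also have "\<dots> = (\<Sum>\<nu>\<in>Mon n d. \<kappa> \<nu> (inv g i) (inv g j) * mmon \<nu> X)"
  proof (intro sum.cong refl)
    fix \<nu> assume "\<nu> \<in> Mon n d"
    then have "\<kappa> (gm g \<nu>) (g (inv g i)) (g (inv g j)) = \<kappa> \<nu> (inv g i) (inv g j)"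
      using assms g ig unfolding invar_def by blast
    then show "\<kappa> (gm g \<nu>) i j * mmon \<nu> X = \<kappa> \<nu> (inv g i) (inv g j) * mmon \<nu> X"
      by (simp add: permutes_inverses[OF g])
  qed
  also have "\<dots> = perm_act g (Fk n d \<kappa> X) i j"
    by (simp add: perm_act_def Fk_def)
  finally show "Fk n d \<kappa> (perm_act g X) i j = perm_act g (Fk n d \<kappa> X) i j" .
qed

lemma equiv_invar:
  assumes "\<And>g X i j. g permutes {0..<n} \<Longrightarrow> X \<in> sym_mats n \<Longrightarrow> i < n \<Longrightarrow> j < n \<Longrightarrow>
      Fk n d \<kappa> (perm_act g X) i j = Fk n d \<kappa> X (inv g i) (inv g j)"
  shows "invar n d \<kappa>"
  unfolding invar_def
proof (intro allI impI ballI)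
  fix g \<mu> i j assume g: "g permutes {0..<n}" and m: "\<mu> \<in> Mon n d" and ij: "i < n" "j < n"
  have gij: "g i < n" "g j < n" using perm_lt[OF g] ij by auto
  have "\<forall>X\<in>sym_mats n. (\<Sum>\<nu>\<in>Mon n d. (\<kappa> (gm g \<nu>) (g i) (g j) - \<kappa> \<nu> i j) * mmon \<nu> X) = 0"
  proof
    fix X assume X: "X \<in> sym_mats n"
    have "Fk n d \<kappa> (perm_act g X) (g i) (g j) = Fk n d \<kappa> X i j"
      using assms[OF g X gij] by (simp add: permutes_inverses[OF g])
    moreover have "Fk n d \<kappa> (perm_act g X) (g i) (g j) = (\<Sum>\<nu>\<in>Mon n d. \<kappa> (gm g \<nu>) (g i) (g j) * mmon \<nu> X)"
      by (rule Fk_perm[OF g sym_mats_symm[OF X]])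
    ultimately have "(\<Sum>\<nu>\<in>Mon n d. \<kappa> (gm g \<nu>) (g i) (g j) * mmon \<nu> X) = (\<Sum>\<nu>\<in>Mon n d. \<kappa> \<nu> i j * mmon \<nu> X)"
      unfolding Fk_def by simp
    then show "(\<Sum>\<nu>\<in>Mon n d. (\<kappa> (gm g \<nu>) (g i) (g j) - \<kappa> \<nu> i j) * mmon \<nu> X) = 0"
      by (simp add: left_diff_distrib sum_subtractf)
  qed
  from mon_indep[OF this m] show "\<kappa> (gm g \<mu>) (g i) (g j) = \<kappa> \<mu> i j" by simp
qed


lemma gm_cong: "(\<And>e x. e \<in># E \<Longrightarrow> x \<in> set_uprod e \<Longrightarrow> f x = h x) \<Longrightarrow> gm f E = gm h E"
  unfolding gm_def by (intro image_mset_cong uprod.map_cong0) auto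

lemma orient_ex: "\<exists>D. image_mset (\<lambda>(r, s). Upair r s) D = E"
proof (induction E)
  case empty then show ?case by (intro exI[of _ "{#}"]) simp
next
  case (add e E)
  then obtain D where D: "image_mset (\<lambda>(r, s). Upair r s) D = E" by blast
  obtain r s where e: "e = Upair r s" by (cases e)
  show ?case using D e by (intro exI[of _ "add_mset (r, s) D"]) simp
qed

lemma orient: "image_mset (\<lambda>(r, s). Upair r s) (orient E) = E"
  unfolding orient_def using orient_ex[of E] by (rule someI_ex)

lemma prod_orient:
  assumes "symm X"
  shows "prod_mset (image_mset (\<lambda>(r, s). X (jj r) (jj s)) (orient E)) = mmon (gm jj E) X"
proof -
  have "mmon (gm jj E) X = prod_mset (image_mset (\<lambda>p. uval X (map_uprod jj (case p of (r, s) \<Rightarrow> Upair r s))) (orient E))"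
    unfolding mmon_def gm_def
    by (subst (1) orient[of E, symmetric]) (simp add: image_mset.compositionality o_def)
  also have "\<dots> = prod_mset (image_mset (\<lambda>(r, s). X (jj r) (jj s)) (orient E))"
    by (intro arg_cong[where f = prod_mset] image_mset_cong) (auto simp: uval_Upair[OF assms])
  finally show ?thesis by simp
qed

definition JJ :: "nat \<Rightarrow> ugraph \<Rightarrow> nat \<Rightarrow> nat \<Rightarrow> (nat \<Rightarrow> nat) set" where
  "JJ n H i j = {jj \<in> Pi\<^sub>E {0..<nverts H} (\<lambda>_. {0..<n}). jj (outa H) = i \<and> jj (outb H) = j}"

definition kH :: "nat \<Rightarrow> ugraph \<Rightarrow> nat uprod multiset \<Rightarrow> nat \<Rightarrow> nat \<Rightarrow> real" where
  "kH n H \<mu> i j = real (card {jj \<in> JJ n H i j. gm jj (uedges H) = \<mu>})"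

lemma finite_JJ: "finite (JJ n H i j)"
  unfolding JJ_def by (rule finite_subset[OF _ finite_PiE[of "{0..<nverts H}" "\<lambda>_. {0..<n}"]]) auto

lemma gm_in_Mon:
  assumes "admissible n d H" "jj \<in> Pi\<^sub>E {0..<nverts H} (\<lambda>_. {0..<n})"
  shows "gm jj (uedges H) \<in> Mon n d"
proof -
  have "set_uprod (map_uprod jj e) \<subseteq> {0..<n}" if "e \<in># uedges H" for e
  proof -
    have "set_uprod e \<subseteq> {0..<nverts H}" using assms(1) that by (auto simp: admissible_def wf_ugraph_def)
    then show ?thesis using assms(2) by (auto simp: uprod.set_map PiE_iff)
  qed
  then show ?thesis using assms(1) by (auto simp: Mon_def gm_def UU_def admissible_def)
qed

lemma P_graph_Fk:
  assumes "admissible n d H" "X \<in> sym_mats n"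
  shows "P_graph n H X i j = Fk n d (kH n H) X i j"
proof -
  have sX: "symm X" using sym_mats_symm[OF assms(2)] .
  have "P_graph n H X i j = (\<Sum>jj\<in>JJ n H i j. mmon (gm jj (uedges H)) X)"
  proof (cases "outa H = outb H \<and> i \<noteq> j")
    case True
    then have "JJ n H i j = {}" by (auto simp: JJ_def)
    then show ?thesis using True by (simp add: P_graph_def P_dir_def)
  next
    case False
    then show ?thesis
      unfolding P_graph_def P_dir_def JJ_def by (auto simp: prod_orient[OF sX])
  qed
  also have "\<dots> = (\<Sum>\<mu>\<in>Mon n d. \<Sum>jj\<in>{jj \<in> JJ n H i j. gm jj (uedges H) = \<mu>}. mmon (gm jj (uedges H)) X)"
    using gm_in_Mon[OF assms(1)]
    by (intro sum.group[symmetric] finite_JJ finite_Mon) (auto simp: JJ_def)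
  also have "\<dots> = Fk n d (kH n H) X i j"
    unfolding Fk_def kH_def by (intro sum.cong) auto
  finally show ?thesis .
qed

lemma kH_invar:
  assumes adm: "admissible n d H"
  shows "invar n d (kH n H)"
  unfolding invar_def
proof (intro allI impI ballI)
  fix g \<mu> i j assume g: "g permutes {0..<n}" and m: "\<mu> \<in> Mon n d" and ij: "i < n" "j < n"
  define m' where "m' = nverts H"
  define E where "E = uedges H"
  have ab: "outa H < m'" "outb H < m'" using adm by (auto simp: admissible_def wf_ugraph_def m'_def)
  have Es: "\<And>e x. e \<in># E \<Longrightarrow> x \<in> set_uprod e \<Longrightarrow> x < m'"
    using adm unfolding admissible_def wf_ugraph_def m'_def E_def by fastforce
  define A where "A = {jj \<in> JJ n H i j. gm jj E = \<mu>}"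
  define B where "B = {jj \<in> JJ n H (g i) (g j). gm jj E = gm g \<mu>}"
  define \<phi> where "\<phi> jj = restrict (g \<circ> jj) {0..<m'}" for jj
  define \<psi> where "\<psi> jj = restrict (inv g \<circ> jj) {0..<m'}" for jj
  have gmphi: "gm (\<phi> jj) E = gm g (gm jj E)" for jj
    unfolding gm_comp \<phi>_def by (rule gm_cong) (auto dest: Es)
  have gmpsi: "gm (\<psi> jj) E = gm (inv g) (gm jj E)" for jj
    unfolding gm_comp \<psi>_def by (rule gm_cong) (auto dest: Es)
  have ig: "inv g permutes {0..<n}" using permutes_inv[OF g] .
  have "bij_betw \<phi> A B"
  proof (rule bij_betw_byWitness[where f' = \<psi>])
    show "\<forall>a\<in>A. \<psi> (\<phi> a) = a"
      by (auto simp: A_def JJ_def \<phi>_def \<psi>_def permutes_inverses[OF g] m'_def fun_eq_iff PiE_def extensional_def)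
    show "\<forall>a\<in>B. \<phi> (\<psi> a) = a"
      by (auto simp: B_def JJ_def \<phi>_def \<psi>_def permutes_inverses[OF g] m'_def fun_eq_iff PiE_def extensional_def)
    show "\<phi> ` A \<subseteq> B"
    proof
      fix y assume "y \<in> \<phi> ` A"
      then obtain jj where jj: "jj \<in> A" "y = \<phi> jj" by auto
      have "gm y E = gm g \<mu>" using jj gmphi by (simp add: A_def)
      moreover have "y \<in> JJ n H (g i) (g j)"
        using jj ab perm_lt[OF g] by (auto simp: A_def JJ_def \<phi>_def m'_def PiE_iff)
      ultimately show "y \<in> B" by (simp add: B_def)
    qed
    show "\<psi> ` B \<subseteq> A"
    proof
      fix y assume "y \<in> \<psi> ` B"
      then obtain jj where jj: "jj \<in> B" "y = \<psi> jj" by auto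
      have "gm y E = \<mu>" using jj gmpsi by (simp add: B_def gm_inv[OF g])
      moreover have "y \<in> JJ n H i j"
        using jj ab perm_lt[OF ig] by (auto simp: B_def JJ_def \<psi>_def m'_def PiE_iff permutes_inverses[OF g])
      ultimately show "y \<in> A" by (simp add: A_def)
    qed
  qed
  then have "card A = card B" by (rule bij_betw_same_card)
  then show "kH n H (gm g \<mu>) (g i) (g j) = kH n H \<mu> i j"
    unfolding kH_def A_def B_def E_def by simp
qed


definition vs :: "nat uprod multiset \<Rightarrow> nat \<Rightarrow> nat \<Rightarrow> nat set" where
  "vs \<mu> i j = insert i (insert j (\<Union>e\<in>set_mset \<mu>. set_uprod e))"

lemma finite_vs: "finite (vs \<mu> i j)"
  by (simp add: vs_def)

lemma vs_img:
  assumes "admissible n d H"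
  shows "vs (gm jj (uedges H)) (jj (outa H)) (jj (outb H)) = jj ` {0..<nverts H}"
proof
  have w: "\<forall>e\<in>#uedges H. set_uprod e \<subseteq> {0..<nverts H}" "outa H < nverts H" "outb H < nverts H"
    using assms by (auto simp: admissible_def wf_ugraph_def)
  then show "vs (gm jj (uedges H)) (jj (outa H)) (jj (outb H)) \<subseteq> jj ` {0..<nverts H}"
    by (auto simp: vs_def gm_def uprod.set_map)
next
  show "jj ` {0..<nverts H} \<subseteq> vs (gm jj (uedges H)) (jj (outa H)) (jj (outb H))"
  proof
    fix y assume "y \<in> jj ` {0..<nverts H}"
    then obtain v where v: "v < nverts H" "y = jj v" by auto
    show "y \<in> vs (gm jj (uedges H)) (jj (outa H)) (jj (outb H))"
    proof (cases "v = outa H \<or> v = outb H")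
      case True then show ?thesis using v by (auto simp: vs_def)
    next
      case False
      then obtain e where "e \<in># uedges H" "v \<in> set_uprod e"
        using assms v unfolding admissible_def by blast
      then show ?thesis using v by (force simp: vs_def gm_def uprod.set_map)
    qed
  qed
qed

lemma kH_nz:
  assumes "admissible n d H" "kH n H \<mu> i j \<noteq> 0"
  shows "\<exists>jj \<in> JJ n H i j. gm jj (uedges H) = \<mu> \<and> vs \<mu> i j = jj ` {0..<nverts H}"
proof -
  have "card {jj \<in> JJ n H i j. gm jj (uedges H) = \<mu>} \<noteq> 0" using assms(2) by (auto simp: kH_def)
  then have "{jj \<in> JJ n H i j. gm jj (uedges H) = \<mu>} \<noteq> {}" by (metis card.empty)
  then obtain jj where jj: "jj \<in> JJ n H i j" "gm jj (uedges H) = \<mu>" by auto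
  then have "vs \<mu> i j = jj ` {0..<nverts H}" using vs_img[OF assms(1), of jj] by (auto simp: JJ_def)
  then show ?thesis using jj by blast
qed

lemma iso_from_inj:
  assumes a1: "admissible n d H1" and a2: "admissible n d H2"
    and j1: "jj1 \<in> JJ n H1 i j" and j2: "jj2 \<in> JJ n H2 i j"
    and i1: "inj_on jj1 {0..<nverts H1}" and i2: "inj_on jj2 {0..<nverts H2}"
    and eq: "gm jj1 (uedges H1) = gm jj2 (uedges H2)"
  shows "ugraph_iso H1 H2"
proof -
  define m1 where "m1 = nverts H1"
  define m2 where "m2 = nverts H2"
  have o1: "jj1 (outa H1) = i" "jj1 (outb H1) = j" using j1 by (auto simp: JJ_def)
  have o2: "jj2 (outa H2) = i" "jj2 (outb H2) = j" using j2 by (auto simp: JJ_def)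
  have "jj1 ` {0..<m1} = vs (gm jj1 (uedges H1)) i j" using vs_img[OF a1, of jj1] o1 by (simp add: m1_def)
  also have "\<dots> = jj2 ` {0..<m2}" using vs_img[OF a2, of jj2] o2 eq by (simp add: m2_def)
  finally have img: "jj1 ` {0..<m1} = jj2 ` {0..<m2}" .
  have "m1 = m2"
    using arg_cong[OF img, of card] card_image[OF i1] card_image[OF i2] by (simp add: m1_def m2_def)
  define \<sigma> where "\<sigma> = inv_into {0..<m2} jj2 \<circ> jj1"
  have b1: "bij_betw jj1 {0..<m1} (jj1 ` {0..<m1})" using i1 by (simp add: bij_betw_def m1_def)
  have "bij_betw jj2 {0..<m2} (jj2 ` {0..<m2})" using i2 by (simp add: bij_betw_def m2_def)
  from bij_betw_inv_into[OF this]
  have b2: "bij_betw (inv_into {0..<m2} jj2) (jj1 ` {0..<m1}) {0..<m2}"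
    unfolding img .
  have bs: "bij_betw \<sigma> {0..<m1} {0..<m2}" unfolding \<sigma>_def by (rule bij_betw_trans[OF b1 b2])
  have w2: "outa H2 < m2" "outb H2 < m2" "\<And>e x. e \<in># uedges H2 \<Longrightarrow> x \<in> set_uprod e \<Longrightarrow> x < m2"
    using a2 unfolding admissible_def wf_ugraph_def m2_def by fastforce+
  have "\<sigma> (outa H1) = inv_into {0..<m2} jj2 (jj2 (outa H2))" "\<sigma> (outb H1) = inv_into {0..<m2} jj2 (jj2 (outb H2))"
    using o1 o2 by (simp_all add: \<sigma>_def)
  then have sa: "\<sigma> (outa H1) = outa H2" "\<sigma> (outb H1) = outb H2"
    using w2 i2 by (simp_all add: m2_def inv_into_f_f)
  have "gm \<sigma> (uedges H1) = gm (inv_into {0..<m2} jj2) (gm jj2 (uedges H2))"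
    by (simp add: \<sigma>_def gm_comp[symmetric] eq)
  also have "\<dots> = gm id (uedges H2)"
    unfolding gm_comp by (rule gm_cong) (use w2 i2 in \<open>auto simp: inv_into_f_f m2_def\<close>)
  finally have "gm \<sigma> (uedges H1) = uedges H2" by (simp add: gm_id)
  then show ?thesis unfolding ugraph_iso_def using bs sa \<open>m1 = m2\<close>
    by (auto simp: m1_def m2_def gm_def)
qed

lemma self_emb:
  assumes "admissible n d H"
  shows "restrict id {0..<nverts H} \<in> JJ n H (outa H) (outb H)"
    and "inj_on (restrict id {0..<nverts H}) {0..<nverts H}"
    and "gm (restrict id {0..<nverts H}) (uedges H) = uedges H"
    and "kH n H (uedges H) (outa H) (outb H) \<noteq> 0"
    and "uedges H \<in> Mon n d" "outa H < n" "outb H < n"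
    and "vs (uedges H) (outa H) (outb H) = {0..<nverts H}"
proof -
  have w: "outa H < nverts H" "outb H < nverts H" "nverts H \<le> n"
    "\<And>e x. e \<in># uedges H \<Longrightarrow> x \<in> set_uprod e \<Longrightarrow> x < nverts H"
    using assms unfolding admissible_def wf_ugraph_def by fastforce+
  show j: "restrict id {0..<nverts H} \<in> JJ n H (outa H) (outb H)"
    using w by (auto simp: JJ_def)
  show "inj_on (restrict id {0..<nverts H}) {0..<nverts H}" by (auto simp: inj_on_def)
  show g: "gm (restrict id {0..<nverts H}) (uedges H) = uedges H"
    by (subst gm_id[symmetric], rule gm_cong) (auto dest: w(4))
  have "restrict id {0..<nverts H} \<in> {jj \<in> JJ n H (outa H) (outb H). gm jj (uedges H) = uedges H}"
    using j g by simp
  then have "{jj \<in> JJ n H (outa H) (outb H). gm jj (uedges H) = uedges H} \<noteq> {}" by blast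
  then show "kH n H (uedges H) (outa H) (outb H) \<noteq> 0"
    using finite_JJ by (simp add: kH_def)
  show "uedges H \<in> Mon n d" using gm_in_Mon[OF assms, of "restrict id {0..<nverts H}"] j g
    by (simp add: JJ_def)
  show "outa H < n" "outb H < n" using w by auto
  show "vs (uedges H) (outa H) (outb H) = {0..<nverts H}"
    using vs_img[OF assms, of "restrict id {0..<nverts H}"] g w by simp
qed

lemma perm_extend:
  assumes "finite N" "A \<subseteq> N" "inj_on f A" "f ` A \<subseteq> N"
  shows "\<exists>g. g permutes N \<and> (\<forall>x\<in>A. g x = f x)"
proof -
  have "card (N - A) = card (N - f ` A)"
    using assms by (simp add: card_Diff_subset card_image finite_subset)
  then obtain h where h: "bij_betw h (N - A) (N - f ` A)"
    using finite_same_card_bij[of "N - A" "N - f ` A"] assms(1) by auto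
  define g where "g x = (if x \<in> A then f x else if x \<in> N then h x else x)" for x
  have "bij_betw g A (f ` A)"
    using assms(3) by (simp add: bij_betw_def inj_on_def g_def image_def)
  moreover have "bij_betw g (N - A) (N - f ` A)"
    using h by (rule bij_betw_cong[THEN iffD1, rotated]) (auto simp: g_def)
  ultimately have "bij_betw g (A \<union> (N - A)) (f ` A \<union> (N - f ` A))"
    by (rule bij_betw_combine) auto
  moreover have "A \<union> (N - A) = N" "f ` A \<union> (N - f ` A) = N" using assms by auto
  ultimately have "bij_betw g N N" by simp
  then have "g permutes N" by (rule bij_imp_permutes) (auto simp: g_def dest: subsetD[OF assms(2)])
  then show ?thesis by (auto simp: g_def)
qed


lemma card_uprod_le: "card (set_uprod e) \<le> 2"
  by (cases e) (simp add: card_insert_if)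

lemma card_verts: "card (\<Union>e\<in>set_mset \<mu>. set_uprod e) \<le> 2 * size \<mu>"
proof (induction \<mu>)
  case empty then show ?case by simp
next
  case (add e \<mu>)
  have "card (\<Union>e\<in>set_mset (add_mset e \<mu>). set_uprod e) = card (set_uprod e \<union> (\<Union>e\<in>set_mset \<mu>. set_uprod e))"
    by simp
  also have "\<dots> \<le> card (set_uprod e) + card (\<Union>e\<in>set_mset \<mu>. set_uprod e)" by (rule card_Un_le)
  also have "\<dots> \<le> 2 + 2 * size \<mu>" using add card_uprod_le[of e] by linarith
  finally show ?case by simp
qed

lemma bij_facts:
  assumes "bij_betw \<beta> A S"
  shows "\<forall>x\<in>S. inv_into A \<beta> x \<in> A \<and> \<beta> (inv_into A \<beta> x) = x"
    and "\<forall>v\<in>A. \<beta> v \<in> S \<and> inv_into A \<beta> (\<beta> v) = v"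
  using assms
  by (auto simp: bij_betw_def inv_into_f_f f_inv_into_f inv_into_into)

lemma realize:
  assumes RA: "\<forall>H\<in>R. admissible n d H"
    and RI: "\<forall>H. admissible n d H \<longrightarrow> (\<exists>H'\<in>R. ugraph_iso H H')"
    and m: "\<mu> \<in> Mon n d" and ij: "i < n" "j < n"
  shows "\<exists>H\<in>R. \<exists>jj\<in>JJ n H i j. inj_on jj {0..<nverts H} \<and> gm jj (uedges H) = \<mu>"
proof -
  define S where "S = vs \<mu> i j"
  have SN: "S \<subseteq> {0..<n}" using m ij by (auto simp: S_def vs_def Mon_def UU_def)
  have fS: "finite S" by (simp add: S_def finite_vs)
  define k where "k = card S"
  obtain \<beta> where bb: "bij_betw \<beta> {0..<k} S" using ex_bij_betw_nat_finite[OF fS] k_def by blast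
  define \<beta>' where "\<beta>' = inv_into {0..<k} \<beta>"
  note b1 = bij_facts(1)[OF bb, folded \<beta>'_def]
  note b2 = bij_facts(2)[OF bb, folded \<beta>'_def]
  have eS: "x \<in> S" if "e \<in># \<mu>" "x \<in> set_uprod e" for e x using that by (auto simp: S_def vs_def)
  have iS: "i \<in> S" "j \<in> S" by (auto simp: S_def vs_def)
  define G where "G = UG k (gm \<beta>' \<mu>) (\<beta>' i) (\<beta>' j)"
  have admG: "admissible n d G"
    unfolding admissible_def
  proof (intro conjI)
    show "wf_ugraph G"
      unfolding wf_ugraph_def G_def using b1 iS eS by (auto simp: gm_def uprod.set_map)
    have "k \<le> n" unfolding k_def using card_mono[OF _ SN] by simp
    moreover have "k \<le> 2 + 2 * d"
    proof -
      have "k \<le> Suc (Suc (card (\<Union>e\<in>set_mset \<mu>. set_uprod e)))"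
        unfolding k_def S_def vs_def
        using card_insert_le_m1[of "Suc (Suc (card (\<Union>e\<in>set_mset \<mu>. set_uprod e)))" "insert j (\<Union>e\<in>set_mset \<mu>. set_uprod e)" i]
          card_insert_le_m1[of "Suc (card (\<Union>e\<in>set_mset \<mu>. set_uprod e))" "(\<Union>e\<in>set_mset \<mu>. set_uprod e)" j]
        by simp
      also have "\<dots> \<le> 2 + 2 * size \<mu>" using card_verts[of \<mu>] by simp
      also have "\<dots> \<le> 2 + 2 * d" using m by (simp add: Mon_def)
      finally show ?thesis .
    qed
    ultimately show "nverts G \<le> min n (2 + 2 * d)" by (simp add: G_def)
    show "size (uedges G) \<le> d" using m by (simp add: G_def gm_def Mon_def)
    show "\<forall>v<nverts G. v \<noteq> outa G \<and> v \<noteq> outb G \<longrightarrow> (\<exists>e\<in>#uedges G. v \<in> set_uprod e)"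
    proof (intro allI impI)
      fix v assume v: "v < nverts G" "v \<noteq> outa G \<and> v \<noteq> outb G"
      then have vk: "v < k" and vi: "v \<noteq> \<beta>' i" "v \<noteq> \<beta>' j" by (auto simp: G_def)
      have "\<beta> v \<in> S" "\<beta>' (\<beta> v) = v" using b2 vk by auto
      moreover have "\<beta> v \<noteq> i" "\<beta> v \<noteq> j" using vi \<open>\<beta>' (\<beta> v) = v\<close> by auto
      ultimately obtain e0 where e0: "e0 \<in># \<mu>" "\<beta> v \<in> set_uprod e0" by (auto simp: S_def vs_def)
      then have "v \<in> set_uprod (map_uprod \<beta>' e0)" using \<open>\<beta>' (\<beta> v) = v\<close>
        by (force simp: uprod.set_map)
      then show "\<exists>e\<in>#uedges G. v \<in> set_uprod e" using e0 by (auto simp: G_def gm_def)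
    qed
  qed
  then obtain H where H: "H \<in> R" "ugraph_iso G H" using RI by blast
  then obtain \<sigma> where nv: "nverts H = k" and bs: "bij_betw \<sigma> {0..<k} {0..<k}"
    and sE: "image_mset (map_uprod \<sigma>) (gm \<beta>' \<mu>) = uedges H"
    and sa: "\<sigma> (\<beta>' i) = outa H" "\<sigma> (\<beta>' j) = outb H"
    unfolding ugraph_iso_def by (auto simp: G_def)
  define \<sigma>' where "\<sigma>' = inv_into {0..<k} \<sigma>"
  note s1 = bij_facts(1)[OF bs, folded \<sigma>'_def]
  note s2 = bij_facts(2)[OF bs, folded \<sigma>'_def]
  define jj where "jj = restrict (\<beta> \<circ> \<sigma>') {0..<k}"
  have ik: "\<beta>' i < k" "\<beta>' j < k" using b1 iS by auto
  have jjPi: "jj \<in> Pi\<^sub>E {0..<nverts H} (\<lambda>_. {0..<n})"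
    using s1 b2 SN by (force simp: jj_def nv PiE_iff)
  have ja: "jj (outa H) = i" "jj (outb H) = j"
    using sa[symmetric] ik s2 b1 iS by (auto simp: jj_def)
  have injj: "inj_on jj {0..<nverts H}"
  proof (rule inj_onI)
    fix x y assume xy: "x \<in> {0..<nverts H}" "y \<in> {0..<nverts H}" "jj x = jj y"
    then have "\<beta> (\<sigma>' x) = \<beta> (\<sigma>' y)" by (simp add: jj_def nv)
    then have "\<beta>' (\<beta> (\<sigma>' x)) = \<beta>' (\<beta> (\<sigma>' y))" by simp
    then have "\<sigma>' x = \<sigma>' y" using s1 b2 xy by (simp add: nv)
    then have "\<sigma> (\<sigma>' x) = \<sigma> (\<sigma>' y)" by simp
    then show "x = y" using s1 xy by (simp add: nv)
  qed
  have "gm jj (uedges H) = gm (jj \<circ> \<sigma> \<circ> \<beta>') \<mu>"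
    using sE[symmetric] by (simp add: gm_def[symmetric] gm_comp o_assoc)
  also have "\<dots> = gm id \<mu>"
  proof (rule gm_cong)
    fix e x assume "e \<in># \<mu>" "x \<in> set_uprod e"
    then have xS: "x \<in> S" by (rule eS)
    then have "\<beta>' x < k" "\<beta> (\<beta>' x) = x" using b1 by auto
    then show "(jj \<circ> \<sigma> \<circ> \<beta>') x = id x" using s2 by (simp add: jj_def)
  qed
  finally have "gm jj (uedges H) = \<mu>" by (simp add: gm_id)
  then show ?thesis using H(1) jjPi ja injj by (auto simp: JJ_def)
qed


lemma finite_adm: "finite {H. admissible n d H}"
proof (rule finite_subset)
  show "{H. admissible n d H} \<subseteq> (\<lambda>(m, E, a, b). UG m E a b) ` ({0..n} \<times> Mon n d \<times> {0..<n} \<times> {0..<n})"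
  proof
    fix H assume "H \<in> {H. admissible n d H}"
    then have a: "admissible n d H" by simp
    have "uedges H \<in> Mon n d" "outa H < n" "outb H < n" using self_emb[OF a] by auto
    moreover have "nverts H \<le> n" using a by (simp add: admissible_def)
    moreover have "H = UG (nverts H) (uedges H) (outa H) (outb H)" by (cases H) simp
    ultimately show "H \<in> (\<lambda>(m, E, a, b). UG m E a b) ` ({0..n} \<times> Mon n d \<times> {0..<n} \<times> {0..<n})"
      by (intro image_eqI[of _ _ "(nverts H, uedges H, outa H, outb H)"]) auto
  qed
qed (simp add: finite_Mon)

lemma poly_fun_deg_cong:
  assumes "poly_fun_deg n d f" "\<forall>X\<in>sym_mats n. f X = g X"
  shows "poly_fun_deg n d g"
proof -
  from assms(1) obtain M c where M: "finite M"
    "\<forall>\<alpha>\<in>M. (\<forall>p. \<alpha> p \<noteq> 0 \<longrightarrow> p \<in> {0..<n} \<times> {0..<n}) \<and> (\<Sum>p\<in>{0..<n} \<times> {0..<n}. \<alpha> p) \<le> d"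
    "\<forall>X\<in>sym_mats n. f X = (\<Sum>\<alpha>\<in>M. c \<alpha> * (\<Prod>p\<in>{0..<n} \<times> {0..<n}. X (fst p) (snd p) ^ \<alpha> p))"
    unfolding poly_fun_deg_def by blast
  show ?thesis unfolding poly_fun_deg_def
    by (rule exI[of _ M], rule exI[of _ c]) (use M assms(2) in auto)
qed

lemma Fk_lin:
  assumes "finite Rk"
  shows "Fk n d (\<lambda>\<mu> i j. \<kappa>' \<mu> i j + (\<Sum>H\<in>Rk. r H * kk H \<mu> i j)) X i j =
         Fk n d \<kappa>' X i j + (\<Sum>H\<in>Rk. r H * Fk n d (kk H) X i j)"
proof -
  have "Fk n d (\<lambda>\<mu> i j. \<kappa>' \<mu> i j + (\<Sum>H\<in>Rk. r H * kk H \<mu> i j)) X i j =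
      Fk n d \<kappa>' X i j + (\<Sum>\<mu>\<in>Mon n d. \<Sum>H\<in>Rk. r H * kk H \<mu> i j * mmon \<mu> X)"
    unfolding Fk_def sum.distrib[symmetric] by (intro sum.cong refl) (simp add: distrib_right sum_distrib_right)
  also have "(\<Sum>\<mu>\<in>Mon n d. \<Sum>H\<in>Rk. r H * kk H \<mu> i j * mmon \<mu> X) = (\<Sum>H\<in>Rk. r H * Fk n d (kk H) X i j)"
    unfolding Fk_def by (subst sum.swap) (simp add: sum_distrib_left mult.assoc)
  finally show ?thesis .
qed

lemma P_graph_equiv:
  assumes a: "admissible n d H"
  shows "equiv_poly_map n d (P_graph n H)"
  unfolding equiv_poly_map_def
proof (intro conjI allI impI)
  fix i j assume "i < n" "j < n"
  show "poly_fun_deg n d (\<lambda>X. P_graph n H X i j)"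
    by (rule poly_fun_deg_cong[OF mon_to_poly[of n d "\<lambda>\<mu>. kH n H \<mu> i j"]])
       (simp add: P_graph_Fk[OF a] Fk_def)
next
  show "equivariant n (P_graph n H)"
    unfolding equivariant_def
  proof (intro allI impI)
    fix g X i j assume g: "g permutes {0..<n}" and X: "X \<in> sym_mats n" and ij: "i < n" "j < n"
    have "P_graph n H (perm_act g X) i j = Fk n d (kH n H) (perm_act g X) i j"
      by (rule P_graph_Fk[OF a perm_act_sym_mats[OF g X]])
    also have "\<dots> = perm_act g (Fk n d (kH n H) X) i j"
      using invar_equiv[OF kH_invar[OF a]] g X ij unfolding equivariant_def by blast
    also have "\<dots> = perm_act g (P_graph n H X) i j"
      by (simp add: perm_act_def P_graph_Fk[OF a X])
    finally show "P_graph n H (perm_act g X) i j = perm_act g (P_graph n H X) i j" .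
  qed
qed

lemma vs_sub: "\<mu> \<in> Mon n d \<Longrightarrow> i < n \<Longrightarrow> j < n \<Longrightarrow> vs \<mu> i j \<subseteq> {0..<n}"
  by (auto simp: vs_def Mon_def UU_def)

lemma inj_from_card:
  assumes "admissible n d H" "jj \<in> JJ n H i j" "gm jj (uedges H) = \<mu>" "card (vs \<mu> i j) \<ge> nverts H"
  shows "inj_on jj {0..<nverts H}" "vs \<mu> i j = jj ` {0..<nverts H}"
proof -
  show v: "vs \<mu> i j = jj ` {0..<nverts H}" using vs_img[OF assms(1), of jj] assms(2,3) by (auto simp: JJ_def)
  have "card (jj ` {0..<nverts H}) \<le> nverts H" using card_image_le[of "{0..<nverts H}" jj] by simp
  then have "card (jj ` {0..<nverts H}) = card {0..<nverts H}" using assms(4) v by simp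
  then show "inj_on jj {0..<nverts H}" by (rule eq_card_imp_inj_on[rotated]) simp
qed


lemma indep:
  assumes RA: "\<forall>H\<in>R. admissible n d H"
    and RU: "\<forall>H1\<in>R. \<forall>H2\<in>R. ugraph_iso H1 H2 \<longrightarrow> H1 = H2"
    and fR: "finite R"
    and Z: "\<forall>X\<in>sym_mats n. \<forall>i<n. \<forall>j<n. (\<Sum>H\<in>R. c H * P_graph n H X i j) = 0"
  shows "\<forall>H\<in>R. c H = 0"
proof (rule ccontr)
  assume "\<not> (\<forall>H\<in>R. c H = 0)"
  define ZZ where "ZZ = {H\<in>R. c H \<noteq> 0}"
  have ZZne: "ZZ \<noteq> {}" and fZ: "finite ZZ" using \<open>\<not> _\<close> fR by (auto simp: ZZ_def)
  define M where "M = Max (nverts ` ZZ)"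
  have "M \<in> nverts ` ZZ" using Max_in[of "nverts ` ZZ"] fZ ZZne unfolding M_def by auto
  then obtain H0 where H0: "H0 \<in> ZZ" "nverts H0 = M" by auto
  have Mmax: "nverts H \<le> M" if "H \<in> ZZ" for H using fZ that unfolding M_def by simp
  have H0R: "H0 \<in> R" "c H0 \<noteq> 0" using H0 by (auto simp: ZZ_def)
  have a0: "admissible n d H0" using RA H0R by blast
  note se = self_emb[OF a0]
  have coef: "(\<Sum>H\<in>R. c H * kH n H \<mu> i j) = 0" if m: "\<mu> \<in> Mon n d" and ij: "i < n" "j < n" for \<mu> i j
  proof -
    have "\<forall>X\<in>sym_mats n. (\<Sum>\<nu>\<in>Mon n d. (\<Sum>H\<in>R. c H * kH n H \<nu> i j) * mmon \<nu> X) = 0"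
    proof
      fix X assume X: "X \<in> sym_mats n"
      have "(\<Sum>\<nu>\<in>Mon n d. (\<Sum>H\<in>R. c H * kH n H \<nu> i j) * mmon \<nu> X) =
          (\<Sum>H\<in>R. c H * Fk n d (kH n H) X i j)"
        unfolding Fk_def sum_distrib_right sum_distrib_left by (subst sum.swap) (simp add: mult.assoc)
      also have "\<dots> = (\<Sum>H\<in>R. c H * P_graph n H X i j)"
      proof (intro sum.cong refl)
        fix H assume "H \<in> R"
        then show "c H * Fk n d (kH n H) X i j = c H * P_graph n H X i j"
          using P_graph_Fk[OF RA[rule_format, OF \<open>H \<in> R\<close>] X] by simp
      qed
      also have "\<dots> = 0" using Z X ij by blast
      finally show "(\<Sum>\<nu>\<in>Mon n d. (\<Sum>H\<in>R. c H * kH n H \<nu> i j) * mmon \<nu> X) = 0" .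
    qed
    from mon_indep[OF this m] show ?thesis .
  qed
  have others: "c H * kH n H (uedges H0) (outa H0) (outb H0) = 0" if H: "H \<in> R" "H \<noteq> H0" for H
  proof (rule ccontr)
    assume nz: "c H * kH n H (uedges H0) (outa H0) (outb H0) \<noteq> 0"
    then have "H \<in> ZZ" using H by (auto simp: ZZ_def)
    then have le: "nverts H \<le> M" by (rule Mmax)
    have aH: "admissible n d H" using RA H by blast
    obtain jj where jj: "jj \<in> JJ n H (outa H0) (outb H0)" "gm jj (uedges H) = uedges H0"
      using kH_nz[OF aH] nz by force
    have "card (vs (uedges H0) (outa H0) (outb H0)) \<ge> nverts H" using se(8) H0 le by simp
    note ij = inj_from_card[OF aH jj this]
    have "ugraph_iso H H0"
      by (rule iso_from_inj[OF aH a0 jj(1) se(1) ij(1) se(2)]) (simp add: jj(2) se(3))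
    then show False using RU H H0R by blast
  qed
  have "(\<Sum>H\<in>R - {H0}. c H * kH n H (uedges H0) (outa H0) (outb H0)) = 0"
    using others by (intro sum.neutral) auto
  then have "(\<Sum>H\<in>R. c H * kH n H (uedges H0) (outa H0) (outb H0)) = c H0 * kH n H0 (uedges H0) (outa H0) (outb H0)"
    using fR H0R by (subst sum.remove[of R H0]) auto
  moreover have "(\<Sum>H\<in>R. c H * kH n H (uedges H0) (outa H0) (outb H0)) = 0"
    using coef se by blast
  ultimately show False using H0R se(4) by simp
qed

lemma span_ind:
  assumes RA: "\<forall>H\<in>R. admissible n d H"
    and RI: "\<forall>H. admissible n d H \<longrightarrow> (\<exists>H'\<in>R. ugraph_iso H H')"
    and RU: "\<forall>H1\<in>R. \<forall>H2\<in>R. ugraph_iso H1 H2 \<longrightarrow> H1 = H2"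
    and fR: "finite R"
  shows "\<forall>\<kappa>. invar n d \<kappa> \<and> (\<forall>\<mu>\<in>Mon n d. \<forall>i<n. \<forall>j<n. k < card (vs \<mu> i j) \<longrightarrow> \<kappa> \<mu> i j = 0) \<longrightarrow>
    (\<exists>c. \<forall>X\<in>sym_mats n. \<forall>i<n. \<forall>j<n. Fk n d \<kappa> X i j = (\<Sum>H\<in>R. c H * Fk n d (kH n H) X i j))"
proof (induction k)
  case 0
  show ?case
  proof (intro allI impI)
    fix \<kappa> assume h: "invar n d \<kappa> \<and> (\<forall>\<mu>\<in>Mon n d. \<forall>i<n. \<forall>j<n. 0 < card (vs \<mu> i j) \<longrightarrow> \<kappa> \<mu> i j = 0)"
    have "\<kappa> \<mu> i j = 0" if "\<mu> \<in> Mon n d" "i < n" "j < n" for \<mu> i j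
    proof -
      have "vs \<mu> i j \<noteq> {}" by (auto simp: vs_def)
      then have "0 < card (vs \<mu> i j)" using finite_vs by (simp add: card_gt_0_iff)
      then show ?thesis using h that by blast
    qed
    then show "\<exists>c. \<forall>X\<in>sym_mats n. \<forall>i<n. \<forall>j<n. Fk n d \<kappa> X i j = (\<Sum>H\<in>R. c H * Fk n d (kH n H) X i j)"
      by (intro exI[of _ "\<lambda>_. 0"]) (simp add: Fk_def)
  qed
next
  case (Suc k)
  show ?case
  proof (intro allI impI)
    fix \<kappa> assume h: "invar n d \<kappa> \<and> (\<forall>\<mu>\<in>Mon n d. \<forall>i<n. \<forall>j<n. Suc k < card (vs \<mu> i j) \<longrightarrow> \<kappa> \<mu> i j = 0)"
    define Rk where "Rk = {H\<in>R. nverts H = Suc k}"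
    have fRk: "finite Rk" using fR by (simp add: Rk_def)
    define r where "r H = \<kappa> (uedges H) (outa H) (outb H) / kH n H (uedges H) (outa H) (outb H)" for H
    define \<kappa>' where "\<kappa>' \<mu> i j = \<kappa> \<mu> i j - (\<Sum>H\<in>Rk. r H * kH n H \<mu> i j)" for \<mu> i j
    have invk: "invar n d \<kappa>" using h by blast
    have invH: "invar n d (kH n H)" if "H \<in> Rk" for H
      using kH_invar RA that by (auto simp: Rk_def)
    have inv': "invar n d \<kappa>'"
      unfolding invar_def
    proof (intro allI impI ballI)
      fix g \<mu> i j assume g: "g permutes {0..<n}" and m: "\<mu> \<in> Mon n d" and ij: "i < n" "j < n"
      have "(\<Sum>H\<in>Rk. r H * kH n H (gm g \<mu>) (g i) (g j)) = (\<Sum>H\<in>Rk. r H * kH n H \<mu> i j)"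
        using invH g m ij unfolding invar_def by (intro sum.cong refl) auto
      moreover have "\<kappa> (gm g \<mu>) (g i) (g j) = \<kappa> \<mu> i j" using invk g m ij unfolding invar_def by blast
      ultimately show "\<kappa>' (gm g \<mu>) (g i) (g j) = \<kappa>' \<mu> i j" by (simp add: \<kappa>'_def)
    qed
    have van: "\<kappa>' \<mu> i j = 0" if m: "\<mu> \<in> Mon n d" and ij: "i < n" "j < n" and kc: "k < card (vs \<mu> i j)" for \<mu> i j
    proof (cases "Suc k < card (vs \<mu> i j)")
      case True
      have "\<kappa> \<mu> i j = 0" using h m ij True by blast
      moreover have "kH n H \<mu> i j = 0" if "H \<in> Rk" for H
      proof (rule ccontr)
        assume "kH n H \<mu> i j \<noteq> 0"
        moreover have aH: "admissible n d H" using that RA by (auto simp: Rk_def)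
        ultimately obtain jj where "vs \<mu> i j = jj ` {0..<nverts H}" using kH_nz by blast
        then have "card (vs \<mu> i j) \<le> nverts H" using card_image_le[of "{0..<nverts H}" jj] by simp
        then show False using True that by (simp add: Rk_def)
      qed
      ultimately show ?thesis by (simp add: \<kappa>'_def)
    next
      case False
      then have ck: "card (vs \<mu> i j) = Suc k" using kc by simp
      obtain H1 jj1 where H1: "H1 \<in> R" "jj1 \<in> JJ n H1 i j" "inj_on jj1 {0..<nverts H1}" "gm jj1 (uedges H1) = \<mu>"
        using realize[OF RA RI m ij] by blast
      have a1: "admissible n d H1" using RA H1 by blast
      note se = self_emb[OF a1]
      have vs1: "vs \<mu> i j = jj1 ` {0..<nverts H1}" using vs_img[OF a1, of jj1] H1 by (auto simp: JJ_def)
      then have nv1: "nverts H1 = Suc k" using ck card_image[OF H1(3)] by simp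
      then have H1k: "H1 \<in> Rk" using H1 by (simp add: Rk_def)
      have "nverts H1 \<le> n" using a1 by (simp add: admissible_def)
      moreover have "jj1 ` {0..<nverts H1} \<subseteq> {0..<n}" using H1(2) by (auto simp: JJ_def PiE_iff)
      ultimately obtain g where g: "g permutes {0..<n}" "\<forall>x\<in>{0..<nverts H1}. g x = jj1 x"
        using perm_extend[of "{0..<n}" "{0..<nverts H1}" jj1] H1(3) by auto
      have w1: "outa H1 < nverts H1" "outb H1 < nverts H1" "\<And>e x. e \<in># uedges H1 \<Longrightarrow> x \<in> set_uprod e \<Longrightarrow> x < nverts H1"
        using a1 unfolding admissible_def wf_ugraph_def by fastforce+
      have gE: "gm g (uedges H1) = \<mu>" using H1(4) g(2) w1(3) by (subst H1(4)[symmetric], intro gm_cong) auto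
      have gab: "g (outa H1) = i" "g (outb H1) = j" using g(2) w1 H1(2) by (auto simp: JJ_def)
      have k1: "\<kappa> \<mu> i j = \<kappa> (uedges H1) (outa H1) (outb H1)"
        using invk g(1) se(5,6,7) gE gab unfolding invar_def by metis
      have kk1: "kH n H1 \<mu> i j = kH n H1 (uedges H1) (outa H1) (outb H1)"
        using invH[OF H1k] g(1) se(5,6,7) gE gab unfolding invar_def by metis
      have oth: "r H * kH n H \<mu> i j = 0" if "H \<in> Rk" "H \<noteq> H1" for H
      proof (rule ccontr)
        assume "r H * kH n H \<mu> i j \<noteq> 0"
        then have nz: "kH n H \<mu> i j \<noteq> 0" by auto
        have aH: "admissible n d H" using that RA by (auto simp: Rk_def)
        obtain jj where jj: "jj \<in> JJ n H i j" "gm jj (uedges H) = \<mu>" using kH_nz[OF aH nz] by blast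
        have "card (vs \<mu> i j) \<ge> nverts H" using ck that by (simp add: Rk_def)
        note ijj = inj_from_card[OF aH jj this]
        have "ugraph_iso H H1"
          by (rule iso_from_inj[OF aH a1 jj(1) H1(2) ijj(1) H1(3)]) (simp add: jj(2) H1(4))
        then show False using RU that H1(1) by (auto simp: Rk_def)
      qed
      have "(\<Sum>H\<in>Rk - {H1}. r H * kH n H \<mu> i j) = 0" using oth by (intro sum.neutral) auto
      then have "(\<Sum>H\<in>Rk. r H * kH n H \<mu> i j) = r H1 * kH n H1 \<mu> i j"
        using fRk H1k by (subst sum.remove[of Rk H1]) auto
      also have "\<dots> = \<kappa> \<mu> i j" using se(4) k1 kk1 by (simp add: r_def)
      finally show ?thesis by (simp add: \<kappa>'_def)
    qed
    obtain c' where c': "\<forall>X\<in>sym_mats n. \<forall>i<n. \<forall>j<n. Fk n d \<kappa>' X i j = (\<Sum>H\<in>R. c' H * Fk n d (kH n H) X i j)"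
      using Suc.IH inv' van by blast
    define c where "c H = c' H + (if H \<in> Rk then r H else 0)" for H
    show "\<exists>c. \<forall>X\<in>sym_mats n. \<forall>i<n. \<forall>j<n. Fk n d \<kappa> X i j = (\<Sum>H\<in>R. c H * Fk n d (kH n H) X i j)"
    proof (intro exI[of _ c] ballI allI impI)
      fix X i j assume X: "X \<in> sym_mats n" and ij: "i < n" "j < n"
      have "\<kappa> = (\<lambda>\<mu> i j. \<kappa>' \<mu> i j + (\<Sum>H\<in>Rk. r H * kH n H \<mu> i j))" by (simp add: \<kappa>'_def)
      then have "Fk n d \<kappa> X i j = Fk n d \<kappa>' X i j + (\<Sum>H\<in>Rk. r H * Fk n d (kH n H) X i j)"
        using Fk_lin[OF fRk, of n d \<kappa>' r "kH n" X i j] by simp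
      also have "(\<Sum>H\<in>Rk. r H * Fk n d (kH n H) X i j) = (\<Sum>H\<in>R. (if H \<in> Rk then r H else 0) * Fk n d (kH n H) X i j)"
        unfolding Rk_def by (subst sum.inter_filter[OF fR]) (intro sum.cong refl; simp)
      finally show "Fk n d \<kappa> X i j = (\<Sum>H\<in>R. c H * Fk n d (kH n H) X i j)"
        using c' X ij by (simp add: c_def distrib_right sum.distrib)
    qed
  qed
qed

theorem mainTheorem3:
  fixes n d :: nat and R :: "ugraph set"
  assumes "n \<ge> 1"
    and "\<forall>H\<in>R. admissible n d H"
    and "\<forall>H. admissible n d H \<longrightarrow> (\<exists>H'\<in>R. ugraph_iso H H')"
    and "\<forall>H1\<in>R. \<forall>H2\<in>R. ugraph_iso H1 H2 \<longrightarrow> H1 = H2"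
  shows "is_basis_of n (equiv_poly_map n d) R (P_graph n)"
proof -
  note RA = assms(2) and RI = assms(3) and RU = assms(4)
  have fR: "finite R" by (rule finite_subset[OF _ finite_adm[of n d]]) (use RA in auto)
  have S: "\<forall>H\<in>R. equiv_poly_map n d (P_graph n H)" using RA P_graph_equiv by blast
  have I: "\<forall>c :: ugraph \<Rightarrow> real. (\<forall>X\<in>sym_mats n. \<forall>i<n. \<forall>j<n. (\<Sum>H\<in>R. c H * P_graph n H X i j) = 0)
          \<longrightarrow> (\<forall>H\<in>R. c H = 0)"
    using indep[OF RA RU fR] by blast
  have Sp: "\<exists>c :: ugraph \<Rightarrow> real. \<forall>X\<in>sym_mats n. \<forall>i<n. \<forall>j<n. P X i j = (\<Sum>H\<in>R. c H * P_graph n H X i j)"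
    if P: "equiv_poly_map n d P" for P
  proof -
    have "\<forall>i j. \<exists>c. i < n \<longrightarrow> j < n \<longrightarrow> (\<forall>X\<in>sym_mats n. P X i j = (\<Sum>\<mu>\<in>Mon n d. c \<mu> * mmon \<mu> X))"
      using P poly_to_mon unfolding equiv_poly_map_def by blast
    then obtain k0 where k0: "\<And>i j. i < n \<Longrightarrow> j < n \<Longrightarrow> \<forall>X\<in>sym_mats n. P X i j = (\<Sum>\<mu>\<in>Mon n d. k0 i j \<mu> * mmon \<mu> X)"
      by metis
    define \<kappa> where "\<kappa> \<mu> i j = k0 i j \<mu>" for \<mu> i j
    have PF: "P X i j = Fk n d \<kappa> X i j" if "X \<in> sym_mats n" "i < n" "j < n" for X i j
      using k0 that by (simp add: Fk_def \<kappa>_def)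
    have eqv: "equivariant n P" using P by (simp add: equiv_poly_map_def)
    have inv: "invar n d \<kappa>"
    proof (rule equiv_invar)
      fix g X i j assume g: "g permutes {0..<n}" and X: "X \<in> sym_mats n" and ij: "i < n" "j < n"
      have ig: "inv g i < n" "inv g j < n" using perm_lt[OF permutes_inv[OF g]] ij by auto
      have "Fk n d \<kappa> (perm_act g X) i j = P (perm_act g X) i j"
        using PF[OF perm_act_sym_mats[OF g X] ij] by simp
      also have "\<dots> = perm_act g (P X) i j" using eqv g X ij unfolding equivariant_def by blast
      also have "\<dots> = Fk n d \<kappa> X (inv g i) (inv g j)" using PF[OF X ig] by (simp add: perm_act_def)
      finally show "Fk n d \<kappa> (perm_act g X) i j = Fk n d \<kappa> X (inv g i) (inv g j)" .
    qed
    have van: "\<forall>\<mu>\<in>Mon n d. \<forall>i<n. \<forall>j<n. n < card (vs \<mu> i j) \<longrightarrow> \<kappa> \<mu> i j = 0"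
    proof (intro ballI allI impI)
      fix \<mu> i j assume "\<mu> \<in> Mon n d" "i < n" "j < n" "n < card (vs \<mu> i j)"
      moreover have "card (vs \<mu> i j) \<le> n" if "\<mu> \<in> Mon n d" "i < n" "j < n"
        using card_mono[OF _ vs_sub[OF that]] by simp
      ultimately show "\<kappa> \<mu> i j = 0" by force
    qed
    obtain c where c: "\<forall>X\<in>sym_mats n. \<forall>i<n. \<forall>j<n. Fk n d \<kappa> X i j = (\<Sum>H\<in>R. c H * Fk n d (kH n H) X i j)"
      using span_ind[OF RA RI RU fR, of n] inv van by blast
    show ?thesis
    proof (intro exI[of _ c] ballI allI impI)
      fix X i j assume X: "X \<in> sym_mats n" and ij: "i < n" "j < n"
      have "P X i j = (\<Sum>H\<in>R. c H * Fk n d (kH n H) X i j)" using PF[OF X ij] c X ij by simp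
      also have "\<dots> = (\<Sum>H\<in>R. c H * P_graph n H X i j)"
      proof (intro sum.cong refl)
        fix H assume "H \<in> R"
        then show "c H * Fk n d (kH n H) X i j = c H * P_graph n H X i j"
          using P_graph_Fk[OF RA[rule_format, OF \<open>H \<in> R\<close>] X] by simp
      qed
      finally show "P X i j = (\<Sum>H\<in>R. c H * P_graph n H X i j)" .
    qed
  qed
  show ?thesis unfolding is_basis_of_def using fR S I Sp by blast
qed

end
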